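(* Let $\|\cdot\|_F$ and $\|\cdot\|_G$ be $F$-norms on $\mathbb{R}^{d+1}$. Then $\|\cdot\|_F=\|\cdot\|_G$ if and only if $\{\mathbf{x}\in[0,\infty)^{d+1}:\|\mathbf{x}\|_F=1\}=\{\mathbf{x}\in[0,\infty)^{d+1}:\|\mathbf{x}\|_G=1\}$; that is, each $F$-norm is characterized by the part of its unit sphere contained in the positive orthant.
   Context: An $F$-norm on $\mathbb{R}^{d+1}$ is a norm of the form $\|\mathbf{x}\|_F=E(\max(|x_0|,|x_1|X_1,\dots,|x_d|X_d))$, where $\mathbf{X}=(X_1,\dots,X_d)$ has distribution function $F$ and each $X_i$ is a.s. nonnegative with $0<E(X_i)<\infty$. *)

theory Defs
  imports "HOL-Probability.Probability"
begin

text \<open>Vectors of R^(d+1) are represented as functions nat => real whose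
  coordinates with index > d vanish; coordinates are x 0, x 1, ..., x d.\<close>
definition Rvec :: "nat \<Rightarrow> (nat \<Rightarrow> real) set" where
  "Rvec d = {x. \<forall>i>d. x i = 0}"

definition F_vector :: "nat \<Rightarrow> 'a measure \<Rightarrow> (nat \<Rightarrow> 'a \<Rightarrow> real) \<Rightarrow> bool" where
  "F_vector d M X \<longleftrightarrow> prob_space M \<and>
     (\<forall>i\<in>{1..d}. X i \<in> borel_measurable M \<and> (AE \<omega> in M. 0 \<le> X i \<omega>) \<and>
        integrable M (X i) \<and> 0 < (\<integral>\<omega>. X i \<omega> \<partial>M))"

definition Fnorm :: "nat \<Rightarrow> 'a measure \<Rightarrow> (nat \<Rightarrow> 'a \<Rightarrow> real) \<Rightarrow> (nat \<Rightarrow> real) \<Rightarrow> real" where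
  "Fnorm d M X x = (\<integral>\<omega>. Max ({\<bar>x 0\<bar>} \<union> (\<lambda>i. \<bar>x i\<bar> * X i \<omega>) ` {1..d}) \<partial>M)"

end

theory Submission
  imports Defs
begin

lemma Max_scale:
  fixes c :: real and a :: real
  assumes "c \<ge> 0" "finite S"
  shows "Max ({c * a} \<union> (\<lambda>i. c * f i) ` S) = c * Max ({a} \<union> f ` S)"
proof -
  have "{c * a} \<union> (\<lambda>i. c * f i) ` S = (*) c ` ({a} \<union> f ` S)" by auto
  moreover have "mono ((*) c)" using assms(1) by (simp add: mono_def mult_left_mono)
  ultimately show ?thesis
    using assms by (simp add: mono_Max_commute)
qed

lemma Fnorm_scale:
  assumes "c \<ge> 0"
  shows "Fnorm d M X (\<lambda>i. c * \<bar>x i\<bar>) = c * Fnorm d M X x"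
proof -
  have "\<And>\<omega>. Max ({\<bar>c * \<bar>x 0\<bar>\<bar>} \<union> (\<lambda>i. \<bar>c * \<bar>x i\<bar>\<bar> * X i \<omega>) ` {1..d})
        = c * Max ({\<bar>x 0\<bar>} \<union> (\<lambda>i. \<bar>x i\<bar> * X i \<omega>) ` {1..d})"
  proof -
    fix \<omega>
    have "Max ({\<bar>c * \<bar>x 0\<bar>\<bar>} \<union> (\<lambda>i. \<bar>c * \<bar>x i\<bar>\<bar> * X i \<omega>) ` {1..d})
        = Max ({c * \<bar>x 0\<bar>} \<union> (\<lambda>i. c * (\<bar>x i\<bar> * X i \<omega>)) ` {1..d})"
      using assms by (simp add: abs_mult mult.assoc)
    also have "\<dots> = c * Max ({\<bar>x 0\<bar>} \<union> (\<lambda>i. \<bar>x i\<bar> * X i \<omega>) ` {1..d})"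
      using assms by (rule Max_scale) simp
    finally show "?thesis \<omega>" .
  qed
  then show ?thesis unfolding Fnorm_def by simp
qed

lemma Fnorm_abs: "Fnorm d M X (\<lambda>i. \<bar>x i\<bar>) = Fnorm d M X x"
  using Fnorm_scale[of 1 d M X x] by simp

lemma Rvec_abs: "x \<in> Rvec d \<Longrightarrow> (\<lambda>i. c * \<bar>x i\<bar>) \<in> Rvec d"
  by (simp add: Rvec_def)

lemma transfer_eq:
  assumes S: "{x\<in>Rvec d. (\<forall>i\<le>d. 0 \<le> x i) \<and> Fnorm d M X x = 1} =
         {x\<in>Rvec d. (\<forall>i\<le>d. 0 \<le> x i) \<and> Fnorm d N Y x = 1}"
    and x: "x \<in> Rvec d" and c: "Fnorm d M X x > 0"
  shows "Fnorm d N Y x = Fnorm d M X x"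
proof -
  define c where "c = Fnorm d M X x"
  define y where "y = (\<lambda>i. (1/c) * \<bar>x i\<bar>)"
  have cpos: "c > 0" using \<open>Fnorm d M X x > 0\<close> c_def by simp
  have "Fnorm d M X y = 1" unfolding y_def using cpos
    by (subst Fnorm_scale) (auto simp: c_def)
  moreover have "y \<in> Rvec d" unfolding y_def using x by (rule Rvec_abs)
  moreover have "\<forall>i\<le>d. 0 \<le> y i" using cpos by (simp add: y_def)
  ultimately have "y \<in> {x\<in>Rvec d. (\<forall>i\<le>d. 0 \<le> x i) \<and> Fnorm d N Y x = 1}"
    using S by blast
  then have "Fnorm d N Y y = 1" by simp
  moreover have "Fnorm d N Y y = (1/c) * Fnorm d N Y x" unfolding y_def using cpos
    by (subst Fnorm_scale) auto
  ultimately show ?thesis using cpos c_def by (simp add: field_simps)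
qed

lemma Fnorm_nonneg: "Fnorm d K Z x \<ge> 0"
proof -
  have "\<And>w. 0 \<le> Max ({\<bar>x 0\<bar>} \<union> (\<lambda>i. \<bar>x i\<bar> * Z i w) ` {1..d})"
  proof -
    fix w
    have "\<bar>x 0\<bar> \<le> Max ({\<bar>x 0\<bar>} \<union> (\<lambda>i. \<bar>x i\<bar> * Z i w) ` {1..d})"
      by (rule Max_ge) auto
    then show "0 \<le> Max ({\<bar>x 0\<bar>} \<union> (\<lambda>i. \<bar>x i\<bar> * Z i w) ` {1..d})" by linarith
  qed
  then show ?thesis unfolding Fnorm_def by (simp add: integral_nonneg_AE)
qed

theorem corollary6p1:
  fixes d :: nat
    and M :: "'a measure" and X :: "nat \<Rightarrow> 'a \<Rightarrow> real"
    and N :: "'b measure" and Y :: "nat \<Rightarrow> 'b \<Rightarrow> real"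
  assumes "F_vector d M X" and "F_vector d N Y"
  shows "(\<forall>x\<in>Rvec d. Fnorm d M X x = Fnorm d N Y x) \<longleftrightarrow>
         {x\<in>Rvec d. (\<forall>i\<le>d. 0 \<le> x i) \<and> Fnorm d M X x = 1} =
         {x\<in>Rvec d. (\<forall>i\<le>d. 0 \<le> x i) \<and> Fnorm d N Y x = 1}"
proof
  assume "\<forall>x\<in>Rvec d. Fnorm d M X x = Fnorm d N Y x"
  then show "{x\<in>Rvec d. (\<forall>i\<le>d. 0 \<le> x i) \<and> Fnorm d M X x = 1} =
         {x\<in>Rvec d. (\<forall>i\<le>d. 0 \<le> x i) \<and> Fnorm d N Y x = 1}" by auto
next
  assume S: "{x\<in>Rvec d. (\<forall>i\<le>d. 0 \<le> x i) \<and> Fnorm d M X x = 1} =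
         {x\<in>Rvec d. (\<forall>i\<le>d. 0 \<le> x i) \<and> Fnorm d N Y x = 1}"
  show "\<forall>x\<in>Rvec d. Fnorm d M X x = Fnorm d N Y x"
  proof
    fix x assume x: "x \<in> Rvec d"
    note nn = Fnorm_nonneg[of d _ _ x]
    show "Fnorm d M X x = Fnorm d N Y x"
    proof (cases "Fnorm d M X x > 0")
      case True then show ?thesis using transfer_eq[OF S x] by simp
    next
      case False
      show ?thesis
      proof (cases "Fnorm d N Y x > 0")
        case True then show ?thesis using transfer_eq[OF S[symmetric] x] by simp
      next
        case False2: False
        then show ?thesis using False nn[of M X] nn[of N Y] by linarith
      qed
    qed
  qed
qed

end
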